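(* Let $n\ge m\ge0$, $\alpha=(\alpha_1\le\dots\le\alpha_n)$, $\beta=(\beta_1\le\dots\le\beta_m)$ rational numbers in $[0,1)$ with $\alpha_1=0$ and $(\alpha,\beta)$ non-resonant. Define $\theta(k)=(n-m)\alpha_k+\#\{i\mid\beta_i<\alpha_k\}+(n-k)-\sum_{i=1}^n\alpha_i+\sum_{j=1}^m\beta_j$ for $1\le k\le n$ and set $\theta(n+1)=\theta(1)$. Then for all $0\le r\le m$ and $1\le\ell\le s_{r+1}-s_r$, $$n+m-1-w(\omega_{r,\ell})=\theta(s_r+\ell).$$
   Context: Non-resonant: $\alpha_i-\beta_j\notin\mathbb{Z}$ for all $i,j$. $d$ a common denominator, $a_i=d\alpha_i$, $b_j=d\beta_j$. Set $s_0=1$, $s_r=\#\{i:\alpha_i<\beta_r\}$ for $1\le r\le m$, $s_{m+1}=n+1$. For $0\le r\le m$, $1\le\ell\le s_{r+1}-s_r$, let $\omega_{r,\ell}=g_{r,\ell}\,\frac{dx_2}{x_2}\wedge\cdots\wedge\frac{dx_n}{x_n}\wedge\frac{dy_1}{y_1}\wedge\cdots\wedge\frac{dy_m}{y_m}$ with $g_{r,\ell}=x_2^{a_2}\cdots x_{s_r+\ell-1}^{a_{s_r+\ell-1}}\cdot x_{s_r+\ell}^{a_{s_r+\ell}-d}\cdots x_n^{a_n-d}\cdot y_1^{d-b_1}\cdots y_r^{d-b_r}\cdot y_{r+1}^{2d-b_{r+1}}\cdots y_m^{2d-b_m}$. For $a\in\mathbb{C}^\times$, $f_a=\sum_{i=2}^nx_i^d-\sum_jy_j^d+a\prod_jy_j^d/\prod_{i\ge2}x_i^d$,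 and $\Delta(f_a)\subset\mathbb{R}^{n+m-1}$ is the convex hull of $0$ and the exponents of the monomials of $f_a$ (a monomial $\prod x_i^{u_i}\prod y_j^{v_j}$ corresponds to $(u_2,\dots,u_n,v_1,\dots,v_m)$); it does not depend on $a$. $w(\omega_{r,\ell})$ is the smallest positive real $w$ such that the exponent point of $g_{r,\ell}$ lies in $w\cdot\Delta(f_a)$. *)

theory Defs
  imports "HOL-Analysis.Analysis"
begin

text \<open>Points of the ambient space R^(n+m-1) are functions on coordinate labels:
  Inl i is the coordinate of x_i (2 \<le> i \<le> n), Inr j that of y_j (1 \<le> j \<le> m);
  all other labels carry the value 0.\<close>

type_synonym pt = "nat + nat \<Rightarrow> real"

definition conv_hull_pts :: "pt set \<Rightarrow> pt set" where
  "conv_hull_pts V = {p. \<exists>c. (\<forall>v\<in>V. 0 \<le> c v) \<and> sum c V = 1 \<and>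
                          p = (\<lambda>k. \<Sum>v\<in>V. c v * v k)}"

text \<open>Exponent vectors of the monomials of f_a:
  x_i^d (2\<le>i\<le>n), y_j^d (1\<le>j\<le>m), and prod y_j^d / prod_{i\<ge>2} x_i^d.\<close>
definition mono_x :: "nat \<Rightarrow> nat \<Rightarrow> pt" where
  "mono_x d i = (\<lambda>k. if k = Inl i then real d else 0)"

definition mono_y :: "nat \<Rightarrow> nat \<Rightarrow> pt" where
  "mono_y d j = (\<lambda>k. if k = Inr j then real d else 0)"

definition mono_last :: "nat \<Rightarrow> nat \<Rightarrow> nat \<Rightarrow> pt" where
  "mono_last n m d = (\<lambda>k. case k of
      Inl i \<Rightarrow> if 2 \<le> i \<and> i \<le> n then - real d else 0
    | Inr j \<Rightarrow> if 1 \<le> j \<and> j \<le> m then real d else 0)"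

definition Newton_Delta :: "nat \<Rightarrow> nat \<Rightarrow> nat \<Rightarrow> pt set" where
  "Newton_Delta n m d = conv_hull_pts
     ({(\<lambda>_. 0)} \<union> mono_x d ` {2..n} \<union> mono_y d ` {1..m} \<union> {mono_last n m d})"

definition s_idx :: "nat \<Rightarrow> nat \<Rightarrow> (nat \<Rightarrow> real) \<Rightarrow> (nat \<Rightarrow> real) \<Rightarrow> nat \<Rightarrow> nat" where
  "s_idx n m \<alpha> \<beta> r =
     (if r = 0 then 1 else if r = m + 1 then n + 1 else card {i\<in>{1..n}. \<alpha> i < \<beta> r})"

definition g_exp :: "nat \<Rightarrow> nat \<Rightarrow> (nat \<Rightarrow> real) \<Rightarrow> (nat \<Rightarrow> real) \<Rightarrow> nat \<Rightarrow> nat \<Rightarrow> nat \<Rightarrow> pt" where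
  "g_exp n m \<alpha> \<beta> d r l = (\<lambda>k. case k of
      Inl i \<Rightarrow> if 2 \<le> i \<and> i \<le> n then
                 (if i \<le> s_idx n m \<alpha> \<beta> r + l - 1 then real d * \<alpha> i else real d * \<alpha> i - real d)
               else 0
    | Inr j \<Rightarrow> if 1 \<le> j \<and> j \<le> m then
                 (if j \<le> r then real d - real d * \<beta> j else 2 * real d - real d * \<beta> j)
               else 0)"

definition weight :: "nat \<Rightarrow> nat \<Rightarrow> (nat \<Rightarrow> real) \<Rightarrow> (nat \<Rightarrow> real) \<Rightarrow> nat \<Rightarrow> nat \<Rightarrow> nat \<Rightarrow> real" where
  "weight n m \<alpha> \<beta> d r l = Inf {w::real. 0 < w \<and>
      (\<exists>q\<in>Newton_Delta n m d. g_exp n m \<alpha> \<beta> d r l = (\<lambda>k. w * q k))}"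

definition theta0 :: "nat \<Rightarrow> nat \<Rightarrow> (nat \<Rightarrow> real) \<Rightarrow> (nat \<Rightarrow> real) \<Rightarrow> nat \<Rightarrow> real" where
  "theta0 n m \<alpha> \<beta> k = (real n - real m) * \<alpha> k + real (card {i\<in>{1..m}. \<beta> i < \<alpha> k})
      + (real n - real k) - (\<Sum>i=1..n. \<alpha> i) + (\<Sum>j=1..m. \<beta> j)"

definition theta :: "nat \<Rightarrow> nat \<Rightarrow> (nat \<Rightarrow> real) \<Rightarrow> (nat \<Rightarrow> real) \<Rightarrow> nat \<Rightarrow> real" where
  "theta n m \<alpha> \<beta> k = (if k = n + 1 then theta0 n m \<alpha> \<beta> 1 else theta0 n m \<alpha> \<beta> k)"

end

theory Submission
  imports Defs
begin

lemma conv_intro: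
  fixes V :: "pt set" and K :: "nat set"
  assumes "finite V" "finite K" "\<forall>k\<in>K. h k \<in> V" "\<forall>k\<in>K. 0 \<le> lam k" "sum lam K = 1"
  shows "(\<lambda>x. \<Sum>k\<in>K. lam k * h k x) \<in> conv_hull_pts V"
proof -
  define c where "c v = sum lam {k\<in>K. h k = v}" for v
  have img: "h ` K \<subseteq> V" using assms(3) by blast
  have E1: "sum c V = 1" unfolding c_def using sum.group[OF assms(2) assms(1) img, of lam] assms(5) by simp
  have E2: "(\<lambda>x. \<Sum>k\<in>K. lam k * h k x) = (\<lambda>x. \<Sum>v\<in>V. c v * v x)"
  proof
    fix x
    have "(\<Sum>v\<in>V. c v * v x) = (\<Sum>v\<in>V. \<Sum>k\<in>{k\<in>K. h k = v}. lam k * h k x)"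
    proof (rule sum.cong[OF refl])
      fix v assume "v \<in> V"
      have "c v * v x = (\<Sum>k\<in>{k\<in>K. h k = v}. lam k * v x)" unfolding c_def by (rule sum_distrib_right)
      also have "\<dots> = (\<Sum>k\<in>{k\<in>K. h k = v}. lam k * h k x)" by (rule sum.cong) simp_all
      finally show "c v * v x = (\<Sum>k\<in>{k\<in>K. h k = v}. lam k * h k x)" .
    qed
    also have "\<dots> = (\<Sum>k\<in>K. lam k * h k x)"
      by (rule sum.group[OF assms(2) assms(1) img])
    finally show "(\<Sum>k\<in>K. lam k * h k x) = (\<Sum>v\<in>V. c v * v x)" by simp
  qed
  have E3: "\<forall>v\<in>V. 0 \<le> c v"
  proof
    fix v
    have "\<And>k. k \<in> {k\<in>K. h k = v} \<Longrightarrow> 0 \<le> lam k" using assms(4) by simp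
    then show "0 \<le> c v" unfolding c_def by (rule sum_nonneg)
  qed
  have E: "(\<forall>v\<in>V. 0 \<le> c v) \<and> sum c V = 1 \<and> (\<lambda>x. \<Sum>k\<in>K. lam k * h k x) = (\<lambda>x. \<Sum>v\<in>V. c v * v x)"
    using E1 E2 E3 by (intro conjI)
  show ?thesis unfolding conv_hull_pts_def by (rule CollectI, rule exI[of _ c], rule E)
qed

lemma conv_bound:
  fixes V :: "pt set" and L :: "pt \<Rightarrow> real"
  assumes "finite V" "q \<in> conv_hull_pts V"
    and lin: "\<And>c. L (\<lambda>k. \<Sum>v\<in>V. c v * v k) = (\<Sum>v\<in>V. c v * L v)"
    and bd: "\<And>v. v \<in> V \<Longrightarrow> L v \<le> B"
  shows "L q \<le> B"
proof -
  obtain c where c: "\<forall>v\<in>V. 0 \<le> c v" "sum c V = 1" "q = (\<lambda>k. \<Sum>v\<in>V. c v * v k)"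
    using assms(2) unfolding conv_hull_pts_def by blast
  have "L q = (\<Sum>v\<in>V. c v * L v)" using c(3) lin by simp
  also have "\<dots> \<le> (\<Sum>v\<in>V. c v * B)" by (intro sum_mono mult_left_mono) (use c bd in auto)
  also have "\<dots> = B" using c(2) by (simp add: sum_distrib_right[symmetric])
  finally show ?thesis .
qed

lemma card_lt_A:
  fixes \<alpha> :: "nat \<Rightarrow> real"
  assumes sorted: "\<forall>i\<in>{1..n}. \<forall>i'\<in>{1..n}. i \<le> i' \<longrightarrow> \<alpha> i \<le> \<alpha> i'"
    and "k \<in> {1..n}" "\<alpha> k < b"
  shows "k \<le> card {i\<in>{1..n}. \<alpha> i < b}"
proof -
  have "{1..k} \<subseteq> {i\<in>{1..n}. \<alpha> i < b}" using assms by fastforce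
  from card_mono[OF _ this] show ?thesis by simp
qed

lemma card_lt_B:
  fixes \<alpha> :: "nat \<Rightarrow> real"
  assumes sorted: "\<forall>i\<in>{1..n}. \<forall>i'\<in>{1..n}. i \<le> i' \<longrightarrow> \<alpha> i \<le> \<alpha> i'"
    and "k \<in> {1..n}" "b \<le> \<alpha> k"
  shows "card {i\<in>{1..n}. \<alpha> i < b} < k"
proof -
  have "{i\<in>{1..n}. \<alpha> i < b} \<subseteq> {1..k-1}"
  proof
    fix i assume i: "i \<in> {i\<in>{1..n}. \<alpha> i < b}"
    have "\<not> k \<le> i" using i assms by force
    then show "i \<in> {1..k-1}" using i by auto
  qed
  from card_mono[OF _ this] have "card {i\<in>{1..n}. \<alpha> i < b} \<le> k - 1" by simp
  with assms(2) show ?thesis by auto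
qed

lemma card_le_n: "card {i\<in>{1..n::nat}. P i} \<le> n"
proof -
  have "card {i\<in>{1..n::nat}. P i} \<le> card {1..n}" by (rule card_mono) auto
  thus ?thesis by simp
qed

lemma sum_delta_mult:
  fixes f :: "nat \<Rightarrow> real"
  assumes "finite A"
  shows "(\<Sum>k\<in>A. f k * (if k = i then e else 0)) = (if i \<in> A then f i * e else 0)"
proof -
  have "(\<Sum>k\<in>A. f k * (if k = i then e else 0)) = (\<Sum>k\<in>A. if k = i then f k * e else 0)"
    by (rule sum.cong) auto
  thus ?thesis using assms by simp
qed

lemma mono_vals:
  "mono_x d i' (Inl i) = (if i' = i then real d else 0)"
  "mono_x d i' (Inr j) = 0"
  "mono_y d j' (Inl i) = 0"
  "mono_y d j' (Inr j) = (if j' = j then real d else 0)"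
  "mono_last n m d (Inl i) = (if 2 \<le> i \<and> i \<le> n then - real d else 0)"
  "mono_last n m d (Inr j) = (if 1 \<le> j \<and> j \<le> m then real d else 0)"
  by (auto simp: mono_x_def mono_y_def mono_last_def)

lemma split_K:
  fixes f :: "nat \<Rightarrow> real"
  assumes "1 \<le> n"
  shows "(\<Sum>k\<in>{1..n+m+1}. f k) = f 1 + (\<Sum>i=2..n. f i) + (\<Sum>j=1..m. f (n+j)) + f (n+m+1)"
proof -
  have "(\<Sum>k\<in>{1..n+m+1}. f k) = (\<Sum>k\<in>{1..n+m}. f k) + f (n+m+1)"
    by (simp add: add.commute)
  also have "(\<Sum>k\<in>{1..n+m}. f k) = (\<Sum>k\<in>{1..n}. f k) + (\<Sum>k\<in>{n+1..n+m}. f k)"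
    by (rule sum.ub_add_nat) simp
  also have "(\<Sum>k\<in>{1..n}. f k) = f 1 + (\<Sum>i=2..n. f i)"
    using assms by (simp add: sum.atLeast_Suc_atMost numeral_2_eq_2)
  also have "(\<Sum>k\<in>{n+1..n+m}. f k) = (\<Sum>j=1..m. f (n+j))"
    using sum.shift_bounds_cl_nat_ivl[of f 1 n m] by (simp add: add.commute)
  finally show ?thesis by simp
qed


theorem lemma3p9:
  fixes n m d r l :: nat and \<alpha> \<beta> :: "nat \<Rightarrow> real"
  assumes "m \<le> n" and "1 \<le> n"
    and "\<forall>i\<in>{1..n}. \<alpha> i \<in> \<rat> \<and> 0 \<le> \<alpha> i \<and> \<alpha> i < 1"
    and "\<forall>j\<in>{1..m}. \<beta> j \<in> \<rat> \<and> 0 \<le> \<beta> j \<and> \<beta> j < 1"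
    and "\<forall>i\<in>{1..n}. \<forall>i'\<in>{1..n}. i \<le> i' \<longrightarrow> \<alpha> i \<le> \<alpha> i'"
    and "\<forall>j\<in>{1..m}. \<forall>j'\<in>{1..m}. j \<le> j' \<longrightarrow> \<beta> j \<le> \<beta> j'"
    and "\<alpha> 1 = 0"
    and "\<forall>i\<in>{1..n}. \<forall>j\<in>{1..m}. \<alpha> i - \<beta> j \<notin> \<int>"
    and "0 < d"
    and "\<forall>i\<in>{1..n}. real d * \<alpha> i \<in> \<int>"
    and "\<forall>j\<in>{1..m}. real d * \<beta> j \<in> \<int>"
    and "r \<le> m" and "1 \<le> l" and "l \<le> s_idx n m \<alpha> \<beta> (r + 1) - s_idx n m \<alpha> \<beta> r"
  shows "real n + real m - 1 - weight n m \<alpha> \<beta> d r l = theta n m \<alpha> \<beta> (s_idx n m \<alpha> \<beta> r + l)"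
proof -
  note sortA = assms(5) and sortB = assms(6)
  define s0 where "s0 = s_idx n m \<alpha> \<beta> r"
  define s1 where "s1 = s_idx n m \<alpha> \<beta> (r+1)"
  define t where "t = s0 + l"
  have tdef: "s_idx n m \<alpha> \<beta> r + l = t" "l + s_idx n m \<alpha> \<beta> r = t" by (simp_all add: t_def s0_def)
  define g where "g = g_exp n m \<alpha> \<beta> d r l"
  define c where "c = (if t \<le> n then 1 - \<alpha> t else 0)"
  define a where "a i = g (Inl i) / d + c" for i
  define b where "b j = g (Inr j) / d - c" for j
  define W where "W = (\<Sum>i=2..n. a i) + (\<Sum>j=1..m. b j) + c"
  define V where "V = {(\<lambda>_. 0)} \<union> mono_x d ` {2..n} \<union> mono_y d ` {1..m} \<union> {mono_last n m d}"
  have Delta: "Newton_Delta n m d = conv_hull_pts V" unfolding Newton_Delta_def V_def ..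
  have finV: "finite V" unfolding V_def by simp
  have dpos: "real d > 0" using assms by simp
  have bj: "0 \<le> \<beta> j \<and> \<beta> j < 1" if "j \<in> {1..m}" for j using assms(4) that by blast
  have ai: "0 \<le> \<alpha> i \<and> \<alpha> i < 1" if "i \<in> {1..n}" for i using assms(3) that by blast
  have betapos: "\<beta> j > 0" if "j \<in> {1..m}" for j
  proof -
    have "\<alpha> 1 - \<beta> j \<notin> \<int>" using assms(8) that assms(2) by auto
    hence "\<beta> j \<noteq> 0" using assms(7) by auto
    thus ?thesis using bj[OF that] by linarith
  qed
  have s0_ge: "1 \<le> s0"
  proof (cases "r = 0")
    case True thus ?thesis by (simp add: s0_def s_idx_def)
  next
    case False
    hence "r \<in> {1..m}" using assms(12) by auto
    hence "1 \<le> card {i\<in>{1..n}. \<alpha> i < \<beta> r}" using card_lt_A[OF sortA, of 1 "\<beta> r"] betapos assms(7) assms(2) by auto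
    thus ?thesis using False assms(12) by (simp add: s0_def s_idx_def)
  qed
  have s1_le: "s1 \<le> n+1"
  proof -
    have "card {i\<in>{1..n}. \<alpha> i < \<beta> (r+1)} \<le> n" using card_le_n by auto
    thus ?thesis by (simp add: s1_def s_idx_def)
  qed
  have t_gt: "s0 < t" and t_le: "t \<le> s1" using assms(13,14) unfolding t_def s0_def s1_def by auto
  have t2: "2 \<le> t" using s0_ge t_gt by simp
  have tn1: "t \<le> n+1" using t_le s1_le by simp
  have s1_card: "s1 = card {i\<in>{1..n}. \<alpha> i < \<beta> (r+1)}" if "r < m"
    using that by (simp add: s1_def s_idx_def)
  have s0_card: "s0 = card {i\<in>{1..n}. \<alpha> i < \<beta> r}" if "1 \<le> r"
    using that assms(12) by (simp add: s0_def s_idx_def)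
  have rm: "r = m" if "\<not> t \<le> n"
  proof (rule ccontr)
    assume "r \<noteq> m" hence "r < m" using assms(12) by simp
    hence "s1 = card {i\<in>{1..n}. \<alpha> i < \<beta> (r+1)}" by (rule s1_card)
    also have "\<dots> \<le> n" by (rule card_le_n)
    finally have "s1 \<le> n" .
    thus False using t_le that by simp
  qed
  have ge: "\<beta> j \<le> \<alpha> t" if "t \<le> n" "j \<in> {1..r}" for j
  proof -
    have "\<beta> r \<le> \<alpha> t"
    proof (rule ccontr)
      assume "\<not> \<beta> r \<le> \<alpha> t"
      hence "t \<le> s0" using card_lt_A[OF sortA, of t "\<beta> r"] s0_card that t2 by auto
      thus False using t_gt by simp
    qed
    moreover have "\<beta> j \<le> \<beta> r" using sortB that assms(12) by auto
    ultimately show ?thesis by simp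
  qed
  have lt: "\<alpha> t < \<beta> j" if "t \<le> n" "j \<in> {r<..m}" for j
  proof -
    have rm': "r < m" using that by auto
    have "\<alpha> t < \<beta> (r+1)"
    proof (rule ccontr)
      assume "\<not> \<alpha> t < \<beta> (r+1)"
      hence "s1 < t" using card_lt_B[OF sortA, of t "\<beta> (r+1)"] s1_card[OF rm'] that t2 by auto
      thus False using t_le by simp
    qed
    moreover have "\<beta> (r+1) \<le> \<beta> j" using sortB that by auto
    ultimately show ?thesis by simp
  qed
  have cnt: "card {j\<in>{1..m}. \<beta> j < \<alpha> t} = r" if "t \<le> n"
  proof -
    have "{j\<in>{1..m}. \<beta> j < \<alpha> t} = {1..r}"
    proof (intro set_eqI iffI)
      fix j assume j: "j \<in> {j\<in>{1..m}. \<beta> j < \<alpha> t}"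
      hence "\<not> r < j" using lt[OF that, of j] by auto
      thus "j \<in> {1..r}" using j by auto
    next
      fix j assume j: "j \<in> {1..r}"
      hence jm: "j \<in> {1..m}" using assms(12) by auto
      have "\<alpha> t - \<beta> j \<notin> \<int>" using assms(8) jm that t2 by auto
      hence "\<beta> j \<noteq> \<alpha> t" by auto
      thus "j \<in> {j\<in>{1..m}. \<beta> j < \<alpha> t}" using ge[OF that j] jm by auto
    qed
    thus ?thesis by simp
  qed
  have gx: "g (Inl i) = d * (\<alpha> i - (if t \<le> i then 1 else 0))" if "i \<in> {2..n}" for i
    using that t2 by (auto simp: g_def g_exp_def tdef algebra_simps)
  have gy: "g (Inr j) = d * (1 - \<beta> j + (if r < j then 1 else 0))" if "j \<in> {1..m}" for j
    using that by (auto simp: g_def g_exp_def algebra_simps)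
  have gx0: "g (Inl i) = 0" if "i \<notin> {2..n}" for i
    using that by (auto simp: g_def g_exp_def)
  have gy0: "g (Inr j) = 0" if "j \<notin> {1..m}" for j
    using that by (auto simp: g_def g_exp_def)
  have at: "0 \<le> \<alpha> t \<and> \<alpha> t < 1" if "t \<le> n"
  proof -
    have "t \<in> {1..n}" using t2 that by simp
    thus ?thesis using assms(3) by blast
  qed
  have c0: "0 \<le> c" and c1: "c \<le> 1" using at by (auto simp: c_def)
  have a_eq: "a i = \<alpha> i - (if t \<le> i then 1 else 0) + c" if "i \<in> {2..n}" for i
    using gx[OF that] dpos by (simp add: a_def)
  have b_eq: "b j = 1 - \<beta> j + (if r < j then 1 else 0) - c" if "j \<in> {1..m}" for j
    using gy[OF that] dpos by (simp add: b_def)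
  have a_nn: "0 \<le> a i" if "i \<in> {2..n}" for i
  proof (cases "t \<le> i")
    case True
    hence "\<alpha> t \<le> \<alpha> i" using sortA that t2 by auto
    thus ?thesis using a_eq[OF that] True that by (simp add: c_def)
  next
    case False thus ?thesis using a_eq[OF that] ai[of i] that c0 by auto
  qed
  have b_nn: "0 \<le> b j" if "j \<in> {1..m}" for j
  proof (cases "r < j")
    case True thus ?thesis using b_eq[OF that] bj[OF that] c1 by auto
  next
    case False
    show ?thesis
    proof (cases "t \<le> n")
      case True
      thus ?thesis using ge[OF True, of j] b_eq[OF that] False that by (auto simp: c_def)
    next
      case False2: False
      thus ?thesis using b_eq[OF that] False bj[OF that] by (auto simp: c_def)
    qed
  qed
  have W_nn: "0 \<le> W" unfolding W_def using a_nn b_nn c0 by (auto intro!: sum_nonneg add_nonneg_nonneg)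
  have a_t: "a t = 0" if "t \<le> n"
    using a_eq[of t] that t2 by (simp add: c_def)
  have c_t: "c = 0" if "\<not> t \<le> n" using that by (simp add: c_def)
  define L where "L p = (\<Sum>i=2..n. p (Inl i)) + (\<Sum>j=1..m. p (Inr j)) - (if t \<le> n then (real n - real m) * p (Inl t) else 0)" for p :: pt
  have lin: "L (\<lambda>k. \<Sum>v\<in>V. cc v * v k) = (\<Sum>v\<in>V. cc v * L v)" for cc
  proof -
    have 1: "(\<Sum>i=2..n. \<Sum>v\<in>V. cc v * v (Inl i)) = (\<Sum>v\<in>V. cc v * (\<Sum>i=2..n. v (Inl i)))"
      by (subst sum.swap) (simp add: sum_distrib_left)
    have 2: "(\<Sum>j=1..m. \<Sum>v\<in>V. cc v * v (Inr j)) = (\<Sum>v\<in>V. cc v * (\<Sum>j=1..m. v (Inr j)))"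
      by (subst sum.swap) (simp add: sum_distrib_left)
    have 3: "(if t \<le> n then (real n - real m) * (\<Sum>v\<in>V. cc v * v (Inl t)) else 0)
        = (\<Sum>v\<in>V. cc v * (if t \<le> n then (real n - real m) * v (Inl t) else 0))"
      by (simp add: sum_distrib_left algebra_simps)
    show ?thesis unfolding L_def 1 2 3
      by (simp add: sum.distrib sum_subtractf distrib_left right_diff_distrib)
  qed
  have Lbd: "L v \<le> d" if "v \<in> V" for v
  proof -
    have "v = (\<lambda>_. 0) \<or> (\<exists>i\<in>{2..n}. v = mono_x d i) \<or> (\<exists>j\<in>{1..m}. v = mono_y d j) \<or> v = mono_last n m d"
      using that unfolding V_def by blast
    moreover have "L (\<lambda>_. 0) \<le> d" by (simp add: L_def)
    moreover have "L (mono_x d i) \<le> d" if "i \<in> {2..n}" for i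
    proof -
      have "L (mono_x d i) = d - (if t \<le> n then (real n - real m) * (if i = t then d else 0) else 0)"
        using that by (simp add: L_def mono_vals sum_delta_mult)
      moreover have "0 \<le> (if t \<le> n then (real n - real m) * (if i = t then d else 0) else 0)"
        using assms(1) by auto
      ultimately show ?thesis by linarith
    qed
    moreover have "L (mono_y d j) \<le> d" if "j \<in> {1..m}" for j
      using that by (simp add: L_def mono_vals sum_delta_mult)
    moreover have "L (mono_last n m d) \<le> d"
    proof -
      have e1: "(\<Sum>i=2..n. mono_last n m d (Inl i)) = - ((real n - 1) * d)"
        using assms(2) by (simp add: mono_vals of_nat_diff)
      have e2: "(\<Sum>j=1..m. mono_last n m d (Inr j)) = real m * d"
        by (simp add: mono_vals)
      have e3: "mono_last n m d (Inl t) = - real d" if "t \<le> n" using that t2 by (simp add: mono_vals)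
      show ?thesis
      proof (cases "t \<le> n")
        case True
        have "L (mono_last n m d) = - ((real n - 1) * d) + real m * d + (real n - real m) * d"
          unfolding L_def e1 e2 e3[OF True] using True by simp
        also have "\<dots> = d" by (simp add: algebra_simps)
        finally show ?thesis by simp
      next
        case False
        have "L (mono_last n m d) = - ((real n - 1) * d) + real m * d"
          unfolding L_def e1 e2 using False by simp
        also have "\<dots> \<le> d" using assms(1) dpos
          by (simp add: algebra_simps)
        finally show ?thesis .
      qed
    qed
    ultimately show ?thesis by blast
  qed
  have ga: "g (Inl i) = d * (a i - c)" for i using dpos by (simp add: a_def)
  have gb: "g (Inr j) = d * (b j + c)" for j using dpos by (simp add: b_def)
  have s1: "(\<Sum>i=2..n. g (Inl i)) = d * ((\<Sum>i=2..n. a i) - (real n - 1) * c)"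
    using assms(2) by (simp add: ga sum_distrib_left[symmetric] sum_subtractf of_nat_diff)
  have s2: "(\<Sum>j=1..m. g (Inr j)) = d * ((\<Sum>j=1..m. b j) + real m * c)"
    by (simp add: gb sum_distrib_left[symmetric] sum.distrib)
  have Lg: "L g = d * W"
  proof (cases "t \<le> n")
    case True
    have "L g = d * ((\<Sum>i=2..n. a i) - (real n - 1) * c) + d * ((\<Sum>j=1..m. b j) + real m * c)
       - (real n - real m) * (d * (a t - c))" unfolding L_def s1 s2 using True ga[of t] by simp
    also have "\<dots> = d * W" unfolding W_def a_t[OF True] by (simp add: algebra_simps)
    finally show ?thesis .
  next
    case False
    have "L g = d * ((\<Sum>i=2..n. a i) - (real n - 1) * c) + d * ((\<Sum>j=1..m. b j) + real m * c)"
      unfolding L_def s1 s2 using False by simp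
    also have "\<dots> = d * W" unfolding W_def c_t[OF False] by (simp add: algebra_simps)
    finally show ?thesis .
  qed
  have scale: "L (\<lambda>k. w * q k) = w * L q" for w q
    by (simp add: L_def sum_distrib_left algebra_simps)
  define S where "S = {w::real. 0 < w \<and> (\<exists>q\<in>Newton_Delta n m d. g = (\<lambda>k. w * q k))}"
  have S_lower: "W \<le> w" if wS: "w \<in> S" for w
  proof -
    obtain q where q: "q \<in> conv_hull_pts V" "g = (\<lambda>k. w * q k)" and w0: "0 < w"
      using wS unfolding S_def Delta by blast
    have "L q \<le> d" using conv_bound[OF finV q(1), of L d] lin Lbd by blast
    hence "d * W \<le> w * d" using Lg q(2) scale w0 by (metis mult_left_mono less_imp_le)
    thus ?thesis using dpos by (simp add: mult.commute)
  qed
  have S_upper: "w \<in> S" if w0: "0 < w" and wW: "W \<le> w" for w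
  proof -
    define h :: "nat \<Rightarrow> pt" where "h k = (if k = 1 then (\<lambda>_. 0) else if k \<le> n then mono_x d k
        else if k \<le> n + m then mono_y d (k - n) else mono_last n m d)" for k
    define lam where "lam k = (if k = 1 then 1 - W / w else if k \<le> n then a k / w
        else if k \<le> n + m then b (k - n) / w else c / w)" for k
    have hK: "\<forall>k\<in>{1..n+m+1}. h k \<in> V"
    proof
      fix k assume k: "k \<in> {1..n+m+1}"
      consider "k = 1" | "2 \<le> k \<and> k \<le> n" | "n < k \<and> k \<le> n + m" | "k = n+m+1" using k by force
      then show "h k \<in> V"
      proof cases
        case 3
        hence "k - n \<in> {1..m}" by auto
        thus ?thesis using 3 unfolding h_def V_def by auto
      qed (auto simp: h_def V_def)
    qed
    have lamK: "\<forall>k\<in>{1..n+m+1}. 0 \<le> lam k"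
    proof
      fix k assume k: "k \<in> {1..n+m+1}"
      consider "k = 1" | "2 \<le> k \<and> k \<le> n" | "n < k \<and> k \<le> n + m" | "k = n+m+1" using k by force
      then show "0 \<le> lam k"
      proof cases
        case 1 thus ?thesis using w0 wW by (simp add: lam_def)
      next
        case 2 thus ?thesis using a_nn[of k] w0 by (simp add: lam_def)
      next
        case 3
        hence "k - n \<in> {1..m}" by auto
        thus ?thesis using 3 b_nn[of "k-n"] w0 assms(2) by (simp add: lam_def)
      next
        case 4 thus ?thesis using c0 w0 assms(2) by (simp add: lam_def)
      qed
    qed
    have lx: "(\<Sum>i=2..n. lam i * f i) = (\<Sum>i=2..n. a i / w * f i)" for f :: "nat \<Rightarrow> real"
      by (rule sum.cong) (auto simp: lam_def)
    have ly: "(\<Sum>j=1..m. lam (n+j) * f j) = (\<Sum>j=1..m. b j / w * f j)" for f :: "nat \<Rightarrow> real"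
      by (rule sum.cong) (use assms(2) in \<open>auto simp: lam_def\<close>)
    have hx: "(\<Sum>i=2..n. lam i * h i x) = (\<Sum>i=2..n. a i / w * mono_x d i x)" for x
      by (rule sum.cong) (auto simp: lam_def h_def)
    have hy: "(\<Sum>j=1..m. lam (n+j) * h (n+j) x) = (\<Sum>j=1..m. b j / w * mono_y d j x)" for x
      by (rule sum.cong) (use assms(2) in \<open>auto simp: lam_def h_def\<close>)
    have lamN: "lam (n+m+1) = c / w" and hN: "h (n+m+1) = mono_last n m d"
      using assms(2) by (auto simp: lam_def h_def)
    have lam1: "lam 1 = 1 - W / w" and h1: "h 1 = (\<lambda>_. 0)" by (auto simp: lam_def h_def)
    have sumlam: "sum lam {1..n+m+1} = 1"
    proof -
      have "sum lam {1..n+m+1} = (1 - W / w) + (\<Sum>i=2..n. a i / w) + (\<Sum>j=1..m. b j / w) + c / w"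
        using split_K[OF assms(2), of lam m] lx[of "\<lambda>_. 1"] ly[of "\<lambda>_. 1"] lamN lam1 by simp
      also have "\<dots> = 1 - W / w + W / w"
        unfolding W_def by (simp add: sum_divide_distrib[symmetric] add_divide_distrib)
      finally show ?thesis by simp
    qed
    have coords: "(\<Sum>k\<in>{1..n+m+1}. lam k * h k x) = g x / w" for x
    proof -
      have "(\<Sum>k\<in>{1..n+m+1}. lam k * h k x) = (\<Sum>i=2..n. a i / w * mono_x d i x)
          + (\<Sum>j=1..m. b j / w * mono_y d j x) + c / w * mono_last n m d x"
        using split_K[OF assms(2), of "\<lambda>k. lam k * h k x" m] hx hy lamN hN h1 by simp
      also have "\<dots> = g x / w"
      proof (cases x)
        case (Inl i)
        show ?thesis
        proof (cases "i \<in> {2..n}")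
          case True
          have e1: "(\<Sum>i'=2..n. a i' / w * mono_x d i' (Inl i)) = a i / w * d"
            unfolding mono_vals by (subst sum_delta_mult) (use True in auto)
          have e2: "(\<Sum>j=1..m. b j / w * mono_y d j (Inl i)) = 0" unfolding mono_vals by simp
          have e3: "mono_last n m d (Inl i) = - d" using True by (simp add: mono_vals)
          show ?thesis unfolding Inl e1 e2 e3 using ga[of i] dpos w0 by (simp add: field_simps)
        next
          case False
          have e1: "(\<Sum>i'=2..n. a i' / w * mono_x d i' (Inl i)) = 0"
            unfolding mono_vals by (subst sum_delta_mult) (use False in auto)
          have e2: "(\<Sum>j=1..m. b j / w * mono_y d j (Inl i)) = 0" unfolding mono_vals by simp
          have e3: "mono_last n m d (Inl i) = 0" using False by (auto simp: mono_vals)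
          show ?thesis unfolding Inl e1 e2 e3 using gx0[OF False] by simp
        qed
      next
        case (Inr j)
        show ?thesis
        proof (cases "j \<in> {1..m}")
          case True
          have e1: "(\<Sum>i'=2..n. a i' / w * mono_x d i' (Inr j)) = 0" unfolding mono_vals by simp
          have e2: "(\<Sum>j'=1..m. b j' / w * mono_y d j' (Inr j)) = b j / w * d"
            unfolding mono_vals by (subst sum_delta_mult) (use True in auto)
          have e3: "mono_last n m d (Inr j) = d" using True by (simp add: mono_vals)
          show ?thesis unfolding Inr e1 e2 e3 using gb[of j] dpos w0 by (simp add: field_simps)
        next
          case False
          have e1: "(\<Sum>i'=2..n. a i' / w * mono_x d i' (Inr j)) = 0" unfolding mono_vals by simp
          have e2: "(\<Sum>j'=1..m. b j' / w * mono_y d j' (Inr j)) = 0"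
            unfolding mono_vals by (subst sum_delta_mult) (use False in auto)
          have e3: "mono_last n m d (Inr j) = 0" using False by (auto simp: mono_vals)
          show ?thesis unfolding Inr e1 e2 e3 using gy0[OF False] by simp
        qed
      qed
      finally show ?thesis .
    qed
    have "(\<lambda>x. \<Sum>k\<in>{1..n+m+1}. lam k * h k x) \<in> conv_hull_pts V"
      by (rule conv_intro[OF finV _ hK lamK sumlam]) simp
    hence qin: "(\<lambda>x. g x / w) \<in> Newton_Delta n m d" using coords Delta by simp
    have geq: "g = (\<lambda>k. w * (g k / w))" using w0 by simp
    have "\<exists>q\<in>Newton_Delta n m d. g = (\<lambda>k. w * q k)"
      by (rule bexI[where x="\<lambda>x. g x / w"]) (rule geq, rule qin)
    thus ?thesis unfolding S_def using w0 by simp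
  qed
  have Seq: "S = {w. 0 < w \<and> W \<le> w}" using S_lower S_upper unfolding S_def by blast
  have weightW: "weight n m \<alpha> \<beta> d r l = W"
  proof -
    have "weight n m \<alpha> \<beta> d r l = Inf S" unfolding weight_def S_def g_def ..
    also have "\<dots> = W"
    proof (cases "W = 0")
      case True
      hence "S = {0<..}" unfolding Seq by auto
      thus ?thesis using True by simp
    next
      case False
      hence "S = {W..}" unfolding Seq using W_nn by auto
      thus ?thesis by simp
    qed
    finally show ?thesis .
  qed
  have sumA: "(\<Sum>i=1..n. \<alpha> i) = (\<Sum>i=2..n. \<alpha> i)"
    using assms(2,7) by (simp add: sum.atLeast_Suc_atMost numeral_2_eq_2)
  have cntx: "(\<Sum>i=2..n. (if t \<le> i then 1 else 0::real)) = real (n + 1 - t)"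
  proof -
    have "(\<Sum>i=2..n. (if t \<le> i then 1 else 0::real)) = (\<Sum>i\<in>{i\<in>{2..n}. t \<le> i}. 1)"
      by (subst sum.inter_filter) simp_all
    also have "{i\<in>{2..n}. t \<le> i} = {t..n}" using t2 by auto
    finally show ?thesis by simp
  qed
  have cnty: "(\<Sum>j=1..m. (if r < j then 1 else 0::real)) = real (m - r)"
  proof -
    have "(\<Sum>j=1..m. (if r < j then 1 else 0::real)) = (\<Sum>j\<in>{j\<in>{1..m}. r < j}. 1)"
      by (subst sum.inter_filter) simp_all
    also have "{j\<in>{1..m}. r < j} = {Suc r..m}" by auto
    finally show ?thesis by simp
  qed
  have sa: "(\<Sum>i=2..n. a i) = (\<Sum>i=1..n. \<alpha> i) - real (n+1-t) + (real n - 1) * c"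
  proof -
    have "(\<Sum>i=2..n. a i) = (\<Sum>i=2..n. \<alpha> i - (if t \<le> i then 1 else 0) + c)"
      by (rule sum.cong) (simp_all add: a_eq)
    also have "\<dots> = (\<Sum>i=2..n. \<alpha> i) - (\<Sum>i=2..n. (if t \<le> i then 1 else 0::real)) + (real n - 1) * c"
      using assms(2) by (simp add: sum.distrib sum_subtractf of_nat_diff)
    finally show ?thesis using sumA cntx by simp
  qed
  have sb: "(\<Sum>j=1..m. b j) = real m - (\<Sum>j=1..m. \<beta> j) + real (m - r) - real m * c"
  proof -
    have "(\<Sum>j=1..m. b j) = (\<Sum>j=1..m. 1 - \<beta> j + (if r < j then 1 else 0) - c)"
      by (rule sum.cong) (simp_all add: b_eq)
    also have "\<dots> = real m - (\<Sum>j=1..m. \<beta> j) + (\<Sum>j=1..m. (if r < j then 1 else 0::real)) - real m * c"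
      by (simp add: sum.distrib sum_subtractf)
    finally show ?thesis using cnty by simp
  qed
  have Wc: "W = (\<Sum>i=1..n. \<alpha> i) - real (n+1-t) + (real n - 1) * c + real m - (\<Sum>j=1..m. \<beta> j)
      + real (m - r) - real m * c + c" unfolding W_def sa sb by simp
  have e1: "real (n+1-t) = real n + 1 - real t" using tn1 by (simp add: of_nat_diff)
  have e2: "real (m - r) = real m - real r" using assms(12) by (simp add: of_nat_diff)
  show ?thesis
  proof (cases "t \<le> n")
    case True
    have th: "theta n m \<alpha> \<beta> (s_idx n m \<alpha> \<beta> r + l) = (real n - real m) * \<alpha> t + real r
        + (real n - real t) - (\<Sum>i=1..n. \<alpha> i) + (\<Sum>j=1..m. \<beta> j)"
      using True unfolding tdef theta_def theta0_def cnt[OF True] by simp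
    have cc: "c = 1 - \<alpha> t" using True by (simp add: c_def)
    show ?thesis unfolding weightW th Wc e1 e2 cc by (simp add: algebra_simps)
  next
    case False
    hence tn: "t = n+1" using tn1 by simp
    have emp: "{j\<in>{1..m}. \<beta> j < 0} = {}" using bj by force
    have th: "theta n m \<alpha> \<beta> (s_idx n m \<alpha> \<beta> r + l) = real n - 1 - (\<Sum>i=1..n. \<alpha> i) + (\<Sum>j=1..m. \<beta> j)"
      unfolding tdef tn theta_def theta0_def assms(7) emp by simp
    show ?thesis unfolding weightW th Wc e1 e2 using rm[OF False] c_t[OF False] tn by (simp add: algebra_simps)
  qed
qed

end
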